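(* Let $w:=3/\sqrt{2}$ and define, for $q\in(0,1)$ and $t\in[0,w]$, $$\theta_5(q,t):=\sum_{j=0}^{5}q^{j(j+1)/2}(-t+wi)^j,\qquad \theta_*(q,t):=\sum_{j=6}^{\infty}q^{j(j+1)/2}(-t+wi)^j.$$ Then for all $(q,t)\in[0.3,0.6]\times[0,w]$ one has $|\theta_*(q,t)|\leq 0.018$ and $\mathrm{Im}(\theta_5(q,t))>0.13$. Consequently, for $(q,t)\in[0.3,0.6]\times[0,w]$, $\theta(q,-t+wi)\neq 0$, where $\theta(q,x):=\sum_{j=0}^{\infty}q^{j(j+1)/2}x^j$. *)

theory Defs
  imports "HOL-Analysis.Analysis"
begin

definition w :: real where "w = 3 / sqrt 2"

definition zpt :: "real \<Rightarrow> complex" where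
  "zpt t = Complex (- t) w"

definition theta :: "real \<Rightarrow> complex \<Rightarrow> complex" where
  "theta q x = (\<Sum>j. complex_of_real (q ^ (j * (j + 1) div 2)) * x ^ j)"

definition theta5 :: "real \<Rightarrow> real \<Rightarrow> complex" where
  "theta5 q t = (\<Sum>j\<le>5. complex_of_real (q ^ (j * (j + 1) div 2)) * zpt t ^ j)"

definition theta_star :: "real \<Rightarrow> real \<Rightarrow> complex" where
  "theta_star q t = (\<Sum>j. complex_of_real (q ^ ((j + 6) * (j + 7) div 2)) * zpt t ^ (j + 6))"

end

theory Submission
  imports Defs
begin


definition wl :: real where "wl = 2121320/1000000"
definition wh :: real where "wh = 2121321/1000000"

definition fpol :: "real \<Rightarrow> real \<Rightarrow> real" where
 "fpol q s = q - 2 * w * s * q^3 + 27/2 * s^2 * q^6 - 9/2 * q^6 + 18 * w * s * q^10 - 18 * w * s^3 * q^10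
   + 405/4 * s^4 * q^15 - 405/2 * s^2 * q^15 + 81/4 * q^15"

definition LB :: "real \<Rightarrow> real \<Rightarrow> real \<Rightarrow> real \<Rightarrow> real" where
 "LB a b c d =
   (b - 2 * wh * d * b^3 + 27/2 * d^2 * b^6 - 9/2 * b^6 + 18 * wl * d * b^10 - 18 * wh * d^3 * b^10
     + 405/4 * d^4 * b^15 - 405/2 * d^2 * b^15 + 81/4 * b^15)
   - (b - a)  *  max (1 - 2 * wl * d * (3 * a^2) + 27/2 * d^2 * (6 * b^5) - 9/2 * (6 * a^5) + 18 * wh * d * (10 * b^9)
        - 18 * wl * d^3 * (10 * a^9) + 405/4 * d^4 * (15 * b^14) - 405/2 * d^2 * (15 * a^14) + 81/4 * (15 * b^14)) 0
   - (d - c)  *  max (- 2 * wl * a^3 + 27/2 * b^6 * (2 * d) + 18 * wh * b^10 - 18 * wl * a^10 * (3 * c^2)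
        + 405/4 * b^15 * (4 * d^3) - 405/2 * a^15 * (2 * c)) 0"

lemma w_sq: "w^2 = 9/2"
  by (simp add: w_def power_divide)

lemma w_pos: "0 < w" by (simp add: w_def)

lemma w_bounds: "wl \<le> w" "w \<le> wh"
proof -
  have "wl^2 \<le> w^2" by (simp add: w_sq wl_def power_divide)
  then show "wl \<le> w" using w_pos by (simp add: wl_def power2_le_iff_abs_le abs_le_square_iff del: power2_abs) 
next
  have "w^2 \<le> wh^2" by (simp add: w_sq wh_def power_divide)
  then show "w \<le> wh" using w_pos by (simp add: wh_def power2_le_iff_abs_le)
qed

lemma pdiff_bounds:
  fixes a q b :: real
  assumes "0 \<le> a" "a \<le> q" "q \<le> b"
  shows "(b-q) * (n * a^(n-1)) \<le> b^n - q^n" "b^n - q^n \<le> (b-q) * (n * b^(n-1))"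
proof -
  have e: "b^n - q^n = (b - q)  *  (\<Sum>i<n. q^(n - Suc i)  *  b^i)" by (rule power_diff_sumr2)
  have lo: "a^(n-1) \<le> q^(n - Suc i)  *  b^i" if "i < n" for i
  proof -
    have "a^(n-1) = a^(n - Suc i)  *  a^i" using that by (simp add: power_add[symmetric])
    also have "\<dots> \<le> q^(n - Suc i)  *  b^i"
      using assms by (intro mult_mono power_mono) auto
    finally show ?thesis .
  qed
  have hi: "q^(n - Suc i)  *  b^i \<le> b^(n-1)" if "i < n" for i
  proof -
    have "q^(n - Suc i)  *  b^i \<le> b^(n - Suc i)  *  b^i"
      using assms by (intro mult_mono power_mono) auto
    also have "\<dots> = b^(n-1)" using that by (simp add: power_add[symmetric])
    finally show ?thesis .
  qed
  have s1: "n * a^(n-1) \<le> (\<Sum>i<n. q^(n - Suc i)  *  b^i)"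
    using sum_bounded_below[of "{..<n}" "a^(n-1)" "\<lambda>i. q^(n - Suc i)  *  b^i"] lo by simp
  have s2: "(\<Sum>i<n. q^(n - Suc i)  *  b^i) \<le> n * b^(n-1)"
    using sum_bounded_above[of "{..<n}" "\<lambda>i. q^(n - Suc i)  *  b^i" "b^(n-1)"] hi by simp
  have bq: "0 \<le> b - q" using assms by simp
  show "(b-q) * (n * a^(n-1)) \<le> b^n - q^n" unfolding e using s1 bq by (rule mult_left_mono)
  show "b^n - q^n \<le> (b-q) * (n * b^(n-1))" unfolding e using s2 bq by (rule mult_left_mono)
qed


lemma posterm: "0 \<le> (K::real) \<Longrightarrow> K \<le> K' \<Longrightarrow> 0 \<le> X \<Longrightarrow> X \<le> Y \<Longrightarrow> K*X \<le> K'*Y"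
  by (rule mult_mono) auto
lemma negterm: "0 \<le> (K'::real) \<Longrightarrow> K' \<le> K \<Longrightarrow> Y \<le> X \<Longrightarrow> 0 \<le> Y \<Longrightarrow> -(K*X) \<le> -(K'*Y)"
  using mult_mono[of K' K Y X] by auto

lemma box:
  assumes "0 \<le> a" "a \<le> q" "q \<le> b" "0 \<le> c" "c \<le> s" "s \<le> d"
  shows "LB a b c d \<le> fpol q s"
proof -
  have wl0: "0 \<le> wl" by (simp add: wl_def)
  have wl: "wl \<le> w" and wh: "w \<le> wh" by (rule w_bounds)+
  have q0: "0 \<le> q" and b0: "0 \<le> b" and s0: "0 \<le> s" and d0: "0 \<le> d" using assms by linarith+
  note P = pdiff_bounds[OF assms(1-3)]
  note S = pdiff_bounds[OF assms(4-6)]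
  have P1: "(b-q)*(n*a^(n-1)) \<le> b^n - q^n" "b^n - q^n \<le> (b-q)*(n*b^(n-1))" for n
    using P[of n] by auto
  have S1: "(d-s)*(n*c^(n-1)) \<le> d^n - s^n" "d^n - s^n \<le> (d-s)*(n*d^(n-1))" for n
    using S[of n] by auto
  have pa: "a^n \<le> q^n" "q^n \<le> b^n" for n using assms by (auto intro: power_mono)
  have ca: "c^n \<le> s^n" "s^n \<le> d^n" for n using assms by (auto intro: power_mono)
  have qb: "0 \<le> b - q" "b - q \<le> b - a" "0 \<le> d - s" "d - s \<le> d - c" using assms by auto
  define FB where "FB = b - 2*wh*d*b^3 + 27/2*d^2*b^6 - 9/2*b^6 + 18*wl*d*b^10 - 18*wh*d^3*b^10
     + 405/4*d^4*b^15 - 405/2*d^2*b^15 + 81/4*b^15"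
  define UQ where "UQ = 1 - 2*wl*d*(3*a^2) + 27/2*d^2*(6*b^5) - 9/2*(6*a^5) + 18*wh*d*(10*b^9)
        - 18*wl*d^3*(10*a^9) + 405/4*d^4*(15*b^14) - 405/2*d^2*(15*a^14) + 81/4*(15*b^14)"
  define US where "US = - 2*wl*a^3 + 27/2*b^6*(2*d) + 18*wh*b^10 - 18*wl*a^10*(3*c^2)
        + 405/4*b^15*(4*d^3) - 405/2*a^15*(2*c)"
  have LBe: "LB a b c d = FB - (b-a) * max UQ 0 - (d-c) * max US 0"
    unfolding LB_def FB_def UQ_def US_def by simp
  have A: "FB \<le> fpol b d"
  proof -
    have "fpol b d - FB = 2*((wh - w)*(d*b^3)) + 18*((w - wl)*(d*b^10)) + 18*((wh - w)*(d^3*b^10))"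
      unfolding fpol_def FB_def by (simp add: algebra_simps)
    moreover have "0 \<le> (wh - w)*(d*b^3)" "0 \<le> (w - wl)*(d*b^10)" "0 \<le> (wh - w)*(d^3*b^10)"
      using wl wh d0 b0 by auto
    ultimately show ?thesis by linarith
  qed
  have B: "fpol b d - fpol q d \<le> (b - q) * UQ"
  proof -
    have e: "fpol b d - fpol q d = (b - q) - (2*w*d)*(b^3 - q^3) + (27/2*d^2)*(b^6-q^6) - 9/2*(b^6-q^6)
       + (18*w*d)*(b^10-q^10) - (18*w*d^3)*(b^10-q^10) + (405/4*d^4)*(b^15-q^15)
       - (405/2*d^2)*(b^15-q^15) + 81/4*(b^15-q^15)"
      unfolding fpol_def by (simp add: field_simps)
    have e2: "(b - q) * UQ = (b - q) - (2*wl*d)*((b-q)*(3*a^2)) + (27/2*d^2)*((b-q)*(6*b^5)) - 9/2*((b-q)*(6*a^5))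
       + (18*wh*d)*((b-q)*(10*b^9)) - (18*wl*d^3)*((b-q)*(10*a^9)) + (405/4*d^4)*((b-q)*(15*b^14))
       - (405/2*d^2)*((b-q)*(15*a^14)) + 81/4*((b-q)*(15*b^14))"
      unfolding UQ_def by (simp add: field_simps)
    have t2: "-((2*w*d)*(b^3 - q^3)) \<le> -((2*wl*d)*((b-q)*(3*a^2)))"
      using P1[of 3] wl wl0 d0 qb assms(1) by (intro negterm) (auto intro: mult_right_mono)
    have t3: "(27/2*d^2)*(b^6-q^6) \<le> (27/2*d^2)*((b-q)*(6*b^5))"
      using P1[of 6] d0 by (intro mult_left_mono) auto
    have t4: "-(9/2*(b^6-q^6)) \<le> -(9/2*((b-q)*(6*a^5)))"
      using P1[of 6] by auto
    have t5: "(18*w*d)*(b^10-q^10) \<le> (18*wh*d)*((b-q)*(10*b^9))"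
      using P1[of 10] pa[of 10] wh wl wl0 d0 qb by (intro posterm) (auto intro: mult_right_mono)
    have t6: "-((18*w*d^3)*(b^10-q^10)) \<le> -((18*wl*d^3)*((b-q)*(10*a^9)))"
      using P1[of 10] wl wl0 d0 qb assms(1) by (intro negterm) (auto intro: mult_right_mono)
    have t7: "(405/4*d^4)*(b^15-q^15) \<le> (405/4*d^4)*((b-q)*(15*b^14))"
      using P1[of 15] d0 by (intro mult_left_mono) auto
    have t8: "-((405/2*d^2)*(b^15-q^15)) \<le> -((405/2*d^2)*((b-q)*(15*a^14)))"
      using P1[of 15] d0 by (intro le_imp_neg_le mult_left_mono) auto
    have t9: "81/4*(b^15-q^15) \<le> 81/4*((b-q)*(15*b^14))"
      using P1[of 15] by auto
    show ?thesis unfolding e e2 using t2 t3 t4 t5 t6 t7 t8 t9 by (smt (verit))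
  qed
  have C: "fpol q d - fpol q s \<le> (d - s) * US"
  proof -
    have e: "fpol q d - fpol q s = -((2*w*q^3)*(d - s)) + (27/2*q^6)*(d^2-s^2) + (18*w*q^10)*(d-s)
       - (18*w*q^10)*(d^3-s^3) + (405/4*q^15)*(d^4-s^4) - (405/2*q^15)*(d^2-s^2)"
      unfolding fpol_def by (simp add: field_simps)
    have e2: "(d - s) * US = -((2*wl*a^3)*(d-s)) + (27/2*b^6)*((d-s)*(2*d)) + (18*wh*b^10)*(d-s)
       - (18*wl*a^10)*((d-s)*(3*c^2)) + (405/4*b^15)*((d-s)*(4*d^3)) - (405/2*a^15)*((d-s)*(2*c))"
      unfolding US_def by (simp add: field_simps)
    have S2: "(d-s)*(2*c) \<le> d^2 - s^2" "d^2 - s^2 \<le> (d-s)*(2*d)" using S1[of 2] by auto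
    have S3: "(d-s)*(3*c^2) \<le> d^3 - s^3" using S1[of 3] by auto
    have S4: "d^4 - s^4 \<le> (d-s)*(4*d^3)" using S1[of 4] by auto
    have k1: "2*wl*a^3 \<le> 2*w*q^3" using wl wl0 pa[of 3] assms(1) by (auto intro!: mult_mono)
    have k2: "18*wl*a^10 \<le> 18*w*q^10" using wl wl0 pa[of 10] assms(1) by (auto intro!: mult_mono)
    have k3: "18*w*q^10 \<le> 18*wh*b^10" using wh wl wl0 pa[of 10] q0 by (auto intro!: mult_mono)
    have c1: "-((2*w*q^3)*(d - s)) \<le> -((2*wl*a^3)*(d-s))"
      using k1 qb wl0 assms(1) by (intro negterm) auto
    have c2: "(27/2*q^6)*(d^2-s^2) \<le> (27/2*b^6)*((d-s)*(2*d))"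
      using S2 pa[of 6] ca[of 2] q0 qb d0 by (intro posterm) auto
    have c3: "(18*w*q^10)*(d-s) \<le> (18*wh*b^10)*(d-s)"
      using k3 qb by (intro mult_right_mono) auto
    have c4: "-((18*w*q^10)*(d^3-s^3)) \<le> -((18*wl*a^10)*((d-s)*(3*c^2)))"
      using k2 S3 qb wl0 assms(1,4) by (intro negterm) auto
    have c5: "(405/4*q^15)*(d^4-s^4) \<le> (405/4*b^15)*((d-s)*(4*d^3))"
      using S4 S1[of 4] pa[of 15] q0 qb assms(4) by (intro posterm) auto
    have c6: "-((405/2*q^15)*(d^2-s^2)) \<le> -((405/2*a^15)*((d-s)*(2*c)))"
      using S2 pa[of 15] qb assms(1,4) by (intro negterm) auto
    show ?thesis unfolding e e2 using c1 c2 c3 c4 c5 c6 by linarith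
  qed
  have D1: "(b - q) * UQ \<le> (b - a) * max UQ 0"
  proof -
    have "(b - q) * UQ \<le> (b - q) * max UQ 0" using qb by (intro mult_left_mono) auto
    also have "\<dots> \<le> (b - a) * max UQ 0" using qb by (intro mult_right_mono) auto
    finally show ?thesis .
  qed
  have D2: "(d - s) * US \<le> (d - c) * max US 0"
  proof -
    have "(d - s) * US \<le> (d - s) * max US 0" using qb by (intro mult_left_mono) auto
    also have "\<dots> \<le> (d - c) * max US 0" using qb by (intro mult_right_mono) auto
    finally show ?thesis .
  qed
  show ?thesis unfolding LBe using A B C D1 D2 by linarith
qed

lemma node3:
  assumes "(3/10) \<le> q" "q \<le> (3/8)" "(0) \<le> s" "s \<le> (1)"
  shows "6129/100000 \<le> fpol q s"
proof -
  have "6129/100000 \<le> LB (3/10) (3/8) (0) (1)" by (simp add: LB_def wl_def wh_def power_divide max_def)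
  moreover have "LB (3/10) (3/8) (0) (1) \<le> fpol q s" by (rule box) (use assms in auto)
  ultimately show ?thesis by linarith
qed

lemma node4:
  assumes "(3/8) \<le> q" "q \<le> (9/20)" "(0) \<le> s" "s \<le> (1)"
  shows "6129/100000 \<le> fpol q s"
proof -
  have "6129/100000 \<le> LB (3/8) (9/20) (0) (1)" by (simp add: LB_def wl_def wh_def power_divide max_def)
  moreover have "LB (3/8) (9/20) (0) (1) \<le> fpol q s" by (rule box) (use assms in auto)
  ultimately show ?thesis by linarith
qed

lemma node2:
  assumes "(3/10) \<le> q" "q \<le> (9/20)" "(0) \<le> s" "s \<le> (1)"
  shows "6129/100000 \<le> fpol q s"
proof (cases "q \<le> (3/8)")
  case True
  show ?thesis by (rule node3) (use assms True in linarith)+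
next
  case False
  show ?thesis by (rule node4) (use assms False in linarith)+
qed

lemma node7:
  assumes "(9/20) \<le> q" "q \<le> (21/40)" "(0) \<le> s" "s \<le> (1/2)"
  shows "6129/100000 \<le> fpol q s"
proof -
  have "6129/100000 \<le> LB (9/20) (21/40) (0) (1/2)" by (simp add: LB_def wl_def wh_def power_divide max_def)
  moreover have "LB (9/20) (21/40) (0) (1/2) \<le> fpol q s" by (rule box) (use assms in auto)
  ultimately show ?thesis by linarith
qed

lemma node9:
  assumes "(9/20) \<le> q" "q \<le> (39/80)" "(1/2) \<le> s" "s \<le> (1)"
  shows "6129/100000 \<le> fpol q s"
proof -
  have "6129/100000 \<le> LB (9/20) (39/80) (1/2) (1)" by (simp add: LB_def wl_def wh_def power_divide max_def)
  moreover have "LB (9/20) (39/80) (1/2) (1) \<le> fpol q s" by (rule box) (use assms in auto)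
  ultimately show ?thesis by linarith
qed

lemma node11:
  assumes "(39/80) \<le> q" "q \<le> (21/40)" "(1/2) \<le> s" "s \<le> (3/4)"
  shows "6129/100000 \<le> fpol q s"
proof -
  have "6129/100000 \<le> LB (39/80) (21/40) (1/2) (3/4)" by (simp add: LB_def wl_def wh_def power_divide max_def)
  moreover have "LB (39/80) (21/40) (1/2) (3/4) \<le> fpol q s" by (rule box) (use assms in auto)
  ultimately show ?thesis by linarith
qed

lemma node13:
  assumes "(39/80) \<le> q" "q \<le> (81/160)" "(3/4) \<le> s" "s \<le> (1)"
  shows "6129/100000 \<le> fpol q s"
proof -
  have "6129/100000 \<le> LB (39/80) (81/160) (3/4) (1)" by (simp add: LB_def wl_def wh_def power_divide max_def)
  moreover have "LB (39/80) (81/160) (3/4) (1) \<le> fpol q s" by (rule box) (use assms in auto)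
  ultimately show ?thesis by linarith
qed

lemma node14:
  assumes "(81/160) \<le> q" "q \<le> (21/40)" "(3/4) \<le> s" "s \<le> (1)"
  shows "6129/100000 \<le> fpol q s"
proof -
  have "6129/100000 \<le> LB (81/160) (21/40) (3/4) (1)" by (simp add: LB_def wl_def wh_def power_divide max_def)
  moreover have "LB (81/160) (21/40) (3/4) (1) \<le> fpol q s" by (rule box) (use assms in auto)
  ultimately show ?thesis by linarith
qed

lemma node12:
  assumes "(39/80) \<le> q" "q \<le> (21/40)" "(3/4) \<le> s" "s \<le> (1)"
  shows "6129/100000 \<le> fpol q s"
proof (cases "q \<le> (81/160)")
  case True
  show ?thesis by (rule node13) (use assms True in linarith)+
next
  case False
  show ?thesis by (rule node14) (use assms False in linarith)+
qed

lemma node10: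
  assumes "(39/80) \<le> q" "q \<le> (21/40)" "(1/2) \<le> s" "s \<le> (1)"
  shows "6129/100000 \<le> fpol q s"
proof (cases "s \<le> (3/4)")
  case True
  show ?thesis by (rule node11) (use assms True in linarith)+
next
  case False
  show ?thesis by (rule node12) (use assms False in linarith)+
qed

lemma node8:
  assumes "(9/20) \<le> q" "q \<le> (21/40)" "(1/2) \<le> s" "s \<le> (1)"
  shows "6129/100000 \<le> fpol q s"
proof (cases "q \<le> (39/80)")
  case True
  show ?thesis by (rule node9) (use assms True in linarith)+
next
  case False
  show ?thesis by (rule node10) (use assms False in linarith)+
qed

lemma node6:
  assumes "(9/20) \<le> q" "q \<le> (21/40)" "(0) \<le> s" "s \<le> (1)"
  shows "6129/100000 \<le> fpol q s"
proof (cases "s \<le> (1/2)")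
  case True
  show ?thesis by (rule node7) (use assms True in linarith)+
next
  case False
  show ?thesis by (rule node8) (use assms False in linarith)+
qed

lemma node17:
  assumes "(21/40) \<le> q" "q \<le> (9/16)" "(0) \<le> s" "s \<le> (1/2)"
  shows "6129/100000 \<le> fpol q s"
proof -
  have "6129/100000 \<le> LB (21/40) (9/16) (0) (1/2)" by (simp add: LB_def wl_def wh_def power_divide max_def)
  moreover have "LB (21/40) (9/16) (0) (1/2) \<le> fpol q s" by (rule box) (use assms in auto)
  ultimately show ?thesis by linarith
qed

lemma node18:
  assumes "(9/16) \<le> q" "q \<le> (3/5)" "(0) \<le> s" "s \<le> (1/2)"
  shows "6129/100000 \<le> fpol q s"
proof -
  have "6129/100000 \<le> LB (9/16) (3/5) (0) (1/2)" by (simp add: LB_def wl_def wh_def power_divide max_def)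
  moreover have "LB (9/16) (3/5) (0) (1/2) \<le> fpol q s" by (rule box) (use assms in auto)
  ultimately show ?thesis by linarith
qed

lemma node16:
  assumes "(21/40) \<le> q" "q \<le> (3/5)" "(0) \<le> s" "s \<le> (1/2)"
  shows "6129/100000 \<le> fpol q s"
proof (cases "q \<le> (9/16)")
  case True
  show ?thesis by (rule node17) (use assms True in linarith)+
next
  case False
  show ?thesis by (rule node18) (use assms False in linarith)+
qed

lemma node22:
  assumes "(21/40) \<le> q" "q \<le> (87/160)" "(1/2) \<le> s" "s \<le> (3/4)"
  shows "6129/100000 \<le> fpol q s"
proof -
  have "6129/100000 \<le> LB (21/40) (87/160) (1/2) (3/4)" by (simp add: LB_def wl_def wh_def power_divide max_def)
  moreover have "LB (21/40) (87/160) (1/2) (3/4) \<le> fpol q s" by (rule box) (use assms in auto)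
  ultimately show ?thesis by linarith
qed

lemma node23:
  assumes "(87/160) \<le> q" "q \<le> (9/16)" "(1/2) \<le> s" "s \<le> (3/4)"
  shows "6129/100000 \<le> fpol q s"
proof -
  have "6129/100000 \<le> LB (87/160) (9/16) (1/2) (3/4)" by (simp add: LB_def wl_def wh_def power_divide max_def)
  moreover have "LB (87/160) (9/16) (1/2) (3/4) \<le> fpol q s" by (rule box) (use assms in auto)
  ultimately show ?thesis by linarith
qed

lemma node21:
  assumes "(21/40) \<le> q" "q \<le> (9/16)" "(1/2) \<le> s" "s \<le> (3/4)"
  shows "6129/100000 \<le> fpol q s"
proof (cases "q \<le> (87/160)")
  case True
  show ?thesis by (rule node22) (use assms True in linarith)+
next
  case False
  show ?thesis by (rule node23) (use assms False in linarith)+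
qed

lemma node26:
  assumes "(21/40) \<le> q" "q \<le> (87/160)" "(3/4) \<le> s" "s \<le> (7/8)"
  shows "6129/100000 \<le> fpol q s"
proof -
  have "6129/100000 \<le> LB (21/40) (87/160) (3/4) (7/8)" by (simp add: LB_def wl_def wh_def power_divide max_def)
  moreover have "LB (21/40) (87/160) (3/4) (7/8) \<le> fpol q s" by (rule box) (use assms in auto)
  ultimately show ?thesis by linarith
qed

lemma node27:
  assumes "(21/40) \<le> q" "q \<le> (87/160)" "(7/8) \<le> s" "s \<le> (1)"
  shows "6129/100000 \<le> fpol q s"
proof -
  have "6129/100000 \<le> LB (21/40) (87/160) (7/8) (1)" by (simp add: LB_def wl_def wh_def power_divide max_def)
  moreover have "LB (21/40) (87/160) (7/8) (1) \<le> fpol q s" by (rule box) (use assms in auto)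
  ultimately show ?thesis by linarith
qed

lemma node25:
  assumes "(21/40) \<le> q" "q \<le> (87/160)" "(3/4) \<le> s" "s \<le> (1)"
  shows "6129/100000 \<le> fpol q s"
proof (cases "s \<le> (7/8)")
  case True
  show ?thesis by (rule node26) (use assms True in linarith)+
next
  case False
  show ?thesis by (rule node27) (use assms False in linarith)+
qed

lemma node29:
  assumes "(87/160) \<le> q" "q \<le> (9/16)" "(3/4) \<le> s" "s \<le> (7/8)"
  shows "6129/100000 \<le> fpol q s"
proof -
  have "6129/100000 \<le> LB (87/160) (9/16) (3/4) (7/8)" by (simp add: LB_def wl_def wh_def power_divide max_def)
  moreover have "LB (87/160) (9/16) (3/4) (7/8) \<le> fpol q s" by (rule box) (use assms in auto)
  ultimately show ?thesis by linarith
qed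

lemma node31:
  assumes "(87/160) \<le> q" "q \<le> (177/320)" "(7/8) \<le> s" "s \<le> (1)"
  shows "6129/100000 \<le> fpol q s"
proof -
  have "6129/100000 \<le> LB (87/160) (177/320) (7/8) (1)" by (simp add: LB_def wl_def wh_def power_divide max_def)
  moreover have "LB (87/160) (177/320) (7/8) (1) \<le> fpol q s" by (rule box) (use assms in auto)
  ultimately show ?thesis by linarith
qed

lemma node32:
  assumes "(177/320) \<le> q" "q \<le> (9/16)" "(7/8) \<le> s" "s \<le> (1)"
  shows "6129/100000 \<le> fpol q s"
proof -
  have "6129/100000 \<le> LB (177/320) (9/16) (7/8) (1)" by (simp add: LB_def wl_def wh_def power_divide max_def)
  moreover have "LB (177/320) (9/16) (7/8) (1) \<le> fpol q s" by (rule box) (use assms in auto)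
  ultimately show ?thesis by linarith
qed

lemma node30:
  assumes "(87/160) \<le> q" "q \<le> (9/16)" "(7/8) \<le> s" "s \<le> (1)"
  shows "6129/100000 \<le> fpol q s"
proof (cases "q \<le> (177/320)")
  case True
  show ?thesis by (rule node31) (use assms True in linarith)+
next
  case False
  show ?thesis by (rule node32) (use assms False in linarith)+
qed

lemma node28:
  assumes "(87/160) \<le> q" "q \<le> (9/16)" "(3/4) \<le> s" "s \<le> (1)"
  shows "6129/100000 \<le> fpol q s"
proof (cases "s \<le> (7/8)")
  case True
  show ?thesis by (rule node29) (use assms True in linarith)+
next
  case False
  show ?thesis by (rule node30) (use assms False in linarith)+
qed

lemma node24:
  assumes "(21/40) \<le> q" "q \<le> (9/16)" "(3/4) \<le> s" "s \<le> (1)"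
  shows "6129/100000 \<le> fpol q s"
proof (cases "q \<le> (87/160)")
  case True
  show ?thesis by (rule node25) (use assms True in linarith)+
next
  case False
  show ?thesis by (rule node28) (use assms False in linarith)+
qed

lemma node20:
  assumes "(21/40) \<le> q" "q \<le> (9/16)" "(1/2) \<le> s" "s \<le> (1)"
  shows "6129/100000 \<le> fpol q s"
proof (cases "s \<le> (3/4)")
  case True
  show ?thesis by (rule node21) (use assms True in linarith)+
next
  case False
  show ?thesis by (rule node24) (use assms False in linarith)+
qed

lemma node35:
  assumes "(9/16) \<le> q" "q \<le> (93/160)" "(1/2) \<le> s" "s \<le> (3/4)"
  shows "6129/100000 \<le> fpol q s"
proof -
  have "6129/100000 \<le> LB (9/16) (93/160) (1/2) (3/4)" by (simp add: LB_def wl_def wh_def power_divide max_def)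
  moreover have "LB (9/16) (93/160) (1/2) (3/4) \<le> fpol q s" by (rule box) (use assms in auto)
  ultimately show ?thesis by linarith
qed

lemma node37:
  assumes "(93/160) \<le> q" "q \<le> (3/5)" "(1/2) \<le> s" "s \<le> (5/8)"
  shows "6129/100000 \<le> fpol q s"
proof -
  have "6129/100000 \<le> LB (93/160) (3/5) (1/2) (5/8)" by (simp add: LB_def wl_def wh_def power_divide max_def)
  moreover have "LB (93/160) (3/5) (1/2) (5/8) \<le> fpol q s" by (rule box) (use assms in auto)
  ultimately show ?thesis by linarith
qed

lemma node38:
  assumes "(93/160) \<le> q" "q \<le> (3/5)" "(5/8) \<le> s" "s \<le> (3/4)"
  shows "6129/100000 \<le> fpol q s"
proof -
  have "6129/100000 \<le> LB (93/160) (3/5) (5/8) (3/4)" by (simp add: LB_def wl_def wh_def power_divide max_def)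
  moreover have "LB (93/160) (3/5) (5/8) (3/4) \<le> fpol q s" by (rule box) (use assms in auto)
  ultimately show ?thesis by linarith
qed

lemma node36:
  assumes "(93/160) \<le> q" "q \<le> (3/5)" "(1/2) \<le> s" "s \<le> (3/4)"
  shows "6129/100000 \<le> fpol q s"
proof (cases "s \<le> (5/8)")
  case True
  show ?thesis by (rule node37) (use assms True in linarith)+
next
  case False
  show ?thesis by (rule node38) (use assms False in linarith)+
qed

lemma node34:
  assumes "(9/16) \<le> q" "q \<le> (3/5)" "(1/2) \<le> s" "s \<le> (3/4)"
  shows "6129/100000 \<le> fpol q s"
proof (cases "q \<le> (93/160)")
  case True
  show ?thesis by (rule node35) (use assms True in linarith)+
next
  case False
  show ?thesis by (rule node36) (use assms False in linarith)+
qed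

lemma node42:
  assumes "(9/16) \<le> q" "q \<le> (183/320)" "(3/4) \<le> s" "s \<le> (7/8)"
  shows "6129/100000 \<le> fpol q s"
proof -
  have "6129/100000 \<le> LB (9/16) (183/320) (3/4) (7/8)" by (simp add: LB_def wl_def wh_def power_divide max_def)
  moreover have "LB (9/16) (183/320) (3/4) (7/8) \<le> fpol q s" by (rule box) (use assms in auto)
  ultimately show ?thesis by linarith
qed

lemma node43:
  assumes "(183/320) \<le> q" "q \<le> (93/160)" "(3/4) \<le> s" "s \<le> (7/8)"
  shows "6129/100000 \<le> fpol q s"
proof -
  have "6129/100000 \<le> LB (183/320) (93/160) (3/4) (7/8)" by (simp add: LB_def wl_def wh_def power_divide max_def)
  moreover have "LB (183/320) (93/160) (3/4) (7/8) \<le> fpol q s" by (rule box) (use assms in auto)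
  ultimately show ?thesis by linarith
qed

lemma node41:
  assumes "(9/16) \<le> q" "q \<le> (93/160)" "(3/4) \<le> s" "s \<le> (7/8)"
  shows "6129/100000 \<le> fpol q s"
proof (cases "q \<le> (183/320)")
  case True
  show ?thesis by (rule node42) (use assms True in linarith)+
next
  case False
  show ?thesis by (rule node43) (use assms False in linarith)+
qed

lemma node46:
  assumes "(9/16) \<le> q" "q \<le> (183/320)" "(7/8) \<le> s" "s \<le> (15/16)"
  shows "6129/100000 \<le> fpol q s"
proof -
  have "6129/100000 \<le> LB (9/16) (183/320) (7/8) (15/16)" by (simp add: LB_def wl_def wh_def power_divide max_def)
  moreover have "LB (9/16) (183/320) (7/8) (15/16) \<le> fpol q s" by (rule box) (use assms in auto)
  ultimately show ?thesis by linarith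
qed

lemma node47:
  assumes "(9/16) \<le> q" "q \<le> (183/320)" "(15/16) \<le> s" "s \<le> (1)"
  shows "6129/100000 \<le> fpol q s"
proof -
  have "6129/100000 \<le> LB (9/16) (183/320) (15/16) (1)" by (simp add: LB_def wl_def wh_def power_divide max_def)
  moreover have "LB (9/16) (183/320) (15/16) (1) \<le> fpol q s" by (rule box) (use assms in auto)
  ultimately show ?thesis by linarith
qed

lemma node45:
  assumes "(9/16) \<le> q" "q \<le> (183/320)" "(7/8) \<le> s" "s \<le> (1)"
  shows "6129/100000 \<le> fpol q s"
proof (cases "s \<le> (15/16)")
  case True
  show ?thesis by (rule node46) (use assms True in linarith)+
next
  case False
  show ?thesis by (rule node47) (use assms False in linarith)+
qed

lemma node49:
  assumes "(183/320) \<le> q" "q \<le> (93/160)" "(7/8) \<le> s" "s \<le> (15/16)"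
  shows "6129/100000 \<le> fpol q s"
proof -
  have "6129/100000 \<le> LB (183/320) (93/160) (7/8) (15/16)" by (simp add: LB_def wl_def wh_def power_divide max_def)
  moreover have "LB (183/320) (93/160) (7/8) (15/16) \<le> fpol q s" by (rule box) (use assms in auto)
  ultimately show ?thesis by linarith
qed

lemma node51:
  assumes "(183/320) \<le> q" "q \<le> (369/640)" "(15/16) \<le> s" "s \<le> (1)"
  shows "6129/100000 \<le> fpol q s"
proof -
  have "6129/100000 \<le> LB (183/320) (369/640) (15/16) (1)" by (simp add: LB_def wl_def wh_def power_divide max_def)
  moreover have "LB (183/320) (369/640) (15/16) (1) \<le> fpol q s" by (rule box) (use assms in auto)
  ultimately show ?thesis by linarith
qed

lemma node52:
  assumes "(369/640) \<le> q" "q \<le> (93/160)" "(15/16) \<le> s" "s \<le> (1)"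
  shows "6129/100000 \<le> fpol q s"
proof -
  have "6129/100000 \<le> LB (369/640) (93/160) (15/16) (1)" by (simp add: LB_def wl_def wh_def power_divide max_def)
  moreover have "LB (369/640) (93/160) (15/16) (1) \<le> fpol q s" by (rule box) (use assms in auto)
  ultimately show ?thesis by linarith
qed

lemma node50:
  assumes "(183/320) \<le> q" "q \<le> (93/160)" "(15/16) \<le> s" "s \<le> (1)"
  shows "6129/100000 \<le> fpol q s"
proof (cases "q \<le> (369/640)")
  case True
  show ?thesis by (rule node51) (use assms True in linarith)+
next
  case False
  show ?thesis by (rule node52) (use assms False in linarith)+
qed

lemma node48:
  assumes "(183/320) \<le> q" "q \<le> (93/160)" "(7/8) \<le> s" "s \<le> (1)"
  shows "6129/100000 \<le> fpol q s"
proof (cases "s \<le> (15/16)")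
  case True
  show ?thesis by (rule node49) (use assms True in linarith)+
next
  case False
  show ?thesis by (rule node50) (use assms False in linarith)+
qed

lemma node44:
  assumes "(9/16) \<le> q" "q \<le> (93/160)" "(7/8) \<le> s" "s \<le> (1)"
  shows "6129/100000 \<le> fpol q s"
proof (cases "q \<le> (183/320)")
  case True
  show ?thesis by (rule node45) (use assms True in linarith)+
next
  case False
  show ?thesis by (rule node48) (use assms False in linarith)+
qed

lemma node40:
  assumes "(9/16) \<le> q" "q \<le> (93/160)" "(3/4) \<le> s" "s \<le> (1)"
  shows "6129/100000 \<le> fpol q s"
proof (cases "s \<le> (7/8)")
  case True
  show ?thesis by (rule node41) (use assms True in linarith)+
next
  case False
  show ?thesis by (rule node44) (use assms False in linarith)+
qed

lemma node55:
  assumes "(93/160) \<le> q" "q \<le> (189/320)" "(3/4) \<le> s" "s \<le> (7/8)"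
  shows "6129/100000 \<le> fpol q s"
proof -
  have "6129/100000 \<le> LB (93/160) (189/320) (3/4) (7/8)" by (simp add: LB_def wl_def wh_def power_divide max_def)
  moreover have "LB (93/160) (189/320) (3/4) (7/8) \<le> fpol q s" by (rule box) (use assms in auto)
  ultimately show ?thesis by linarith
qed

lemma node57:
  assumes "(189/320) \<le> q" "q \<le> (3/5)" "(3/4) \<le> s" "s \<le> (13/16)"
  shows "6129/100000 \<le> fpol q s"
proof -
  have "6129/100000 \<le> LB (189/320) (3/5) (3/4) (13/16)" by (simp add: LB_def wl_def wh_def power_divide max_def)
  moreover have "LB (189/320) (3/5) (3/4) (13/16) \<le> fpol q s" by (rule box) (use assms in auto)
  ultimately show ?thesis by linarith
qed

lemma node58:
  assumes "(189/320) \<le> q" "q \<le> (3/5)" "(13/16) \<le> s" "s \<le> (7/8)"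
  shows "6129/100000 \<le> fpol q s"
proof -
  have "6129/100000 \<le> LB (189/320) (3/5) (13/16) (7/8)" by (simp add: LB_def wl_def wh_def power_divide max_def)
  moreover have "LB (189/320) (3/5) (13/16) (7/8) \<le> fpol q s" by (rule box) (use assms in auto)
  ultimately show ?thesis by linarith
qed

lemma node56:
  assumes "(189/320) \<le> q" "q \<le> (3/5)" "(3/4) \<le> s" "s \<le> (7/8)"
  shows "6129/100000 \<le> fpol q s"
proof (cases "s \<le> (13/16)")
  case True
  show ?thesis by (rule node57) (use assms True in linarith)+
next
  case False
  show ?thesis by (rule node58) (use assms False in linarith)+
qed

lemma node54:
  assumes "(93/160) \<le> q" "q \<le> (3/5)" "(3/4) \<le> s" "s \<le> (7/8)"
  shows "6129/100000 \<le> fpol q s"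
proof (cases "q \<le> (189/320)")
  case True
  show ?thesis by (rule node55) (use assms True in linarith)+
next
  case False
  show ?thesis by (rule node56) (use assms False in linarith)+
qed

lemma node61:
  assumes "(93/160) \<le> q" "q \<le> (189/320)" "(7/8) \<le> s" "s \<le> (15/16)"
  shows "6129/100000 \<le> fpol q s"
proof -
  have "6129/100000 \<le> LB (93/160) (189/320) (7/8) (15/16)" by (simp add: LB_def wl_def wh_def power_divide max_def)
  moreover have "LB (93/160) (189/320) (7/8) (15/16) \<le> fpol q s" by (rule box) (use assms in auto)
  ultimately show ?thesis by linarith
qed

lemma node63:
  assumes "(93/160) \<le> q" "q \<le> (75/128)" "(15/16) \<le> s" "s \<le> (1)"
  shows "6129/100000 \<le> fpol q s"
proof -
  have "6129/100000 \<le> LB (93/160) (75/128) (15/16) (1)" by (simp add: LB_def wl_def wh_def power_divide max_def)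
  moreover have "LB (93/160) (75/128) (15/16) (1) \<le> fpol q s" by (rule box) (use assms in auto)
  ultimately show ?thesis by linarith
qed

lemma node64:
  assumes "(75/128) \<le> q" "q \<le> (189/320)" "(15/16) \<le> s" "s \<le> (1)"
  shows "6129/100000 \<le> fpol q s"
proof -
  have "6129/100000 \<le> LB (75/128) (189/320) (15/16) (1)" by (simp add: LB_def wl_def wh_def power_divide max_def)
  moreover have "LB (75/128) (189/320) (15/16) (1) \<le> fpol q s" by (rule box) (use assms in auto)
  ultimately show ?thesis by linarith
qed

lemma node62:
  assumes "(93/160) \<le> q" "q \<le> (189/320)" "(15/16) \<le> s" "s \<le> (1)"
  shows "6129/100000 \<le> fpol q s"
proof (cases "q \<le> (75/128)")
  case True
  show ?thesis by (rule node63) (use assms True in linarith)+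
next
  case False
  show ?thesis by (rule node64) (use assms False in linarith)+
qed

lemma node60:
  assumes "(93/160) \<le> q" "q \<le> (189/320)" "(7/8) \<le> s" "s \<le> (1)"
  shows "6129/100000 \<le> fpol q s"
proof (cases "s \<le> (15/16)")
  case True
  show ?thesis by (rule node61) (use assms True in linarith)+
next
  case False
  show ?thesis by (rule node62) (use assms False in linarith)+
qed

lemma node67:
  assumes "(189/320) \<le> q" "q \<le> (381/640)" "(7/8) \<le> s" "s \<le> (15/16)"
  shows "6129/100000 \<le> fpol q s"
proof -
  have "6129/100000 \<le> LB (189/320) (381/640) (7/8) (15/16)" by (simp add: LB_def wl_def wh_def power_divide max_def)
  moreover have "LB (189/320) (381/640) (7/8) (15/16) \<le> fpol q s" by (rule box) (use assms in auto)
  ultimately show ?thesis by linarith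
qed

lemma node68:
  assumes "(381/640) \<le> q" "q \<le> (3/5)" "(7/8) \<le> s" "s \<le> (15/16)"
  shows "6129/100000 \<le> fpol q s"
proof -
  have "6129/100000 \<le> LB (381/640) (3/5) (7/8) (15/16)" by (simp add: LB_def wl_def wh_def power_divide max_def)
  moreover have "LB (381/640) (3/5) (7/8) (15/16) \<le> fpol q s" by (rule box) (use assms in auto)
  ultimately show ?thesis by linarith
qed

lemma node66:
  assumes "(189/320) \<le> q" "q \<le> (3/5)" "(7/8) \<le> s" "s \<le> (15/16)"
  shows "6129/100000 \<le> fpol q s"
proof (cases "q \<le> (381/640)")
  case True
  show ?thesis by (rule node67) (use assms True in linarith)+
next
  case False
  show ?thesis by (rule node68) (use assms False in linarith)+
qed

lemma node70:
  assumes "(189/320) \<le> q" "q \<le> (381/640)" "(15/16) \<le> s" "s \<le> (1)"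
  shows "6129/100000 \<le> fpol q s"
proof -
  have "6129/100000 \<le> LB (189/320) (381/640) (15/16) (1)" by (simp add: LB_def wl_def wh_def power_divide max_def)
  moreover have "LB (189/320) (381/640) (15/16) (1) \<le> fpol q s" by (rule box) (use assms in auto)
  ultimately show ?thesis by linarith
qed

lemma node72:
  assumes "(381/640) \<le> q" "q \<le> (3/5)" "(15/16) \<le> s" "s \<le> (31/32)"
  shows "6129/100000 \<le> fpol q s"
proof -
  have "6129/100000 \<le> LB (381/640) (3/5) (15/16) (31/32)" by (simp add: LB_def wl_def wh_def power_divide max_def)
  moreover have "LB (381/640) (3/5) (15/16) (31/32) \<le> fpol q s" by (rule box) (use assms in auto)
  ultimately show ?thesis by linarith
qed

lemma node73:
  assumes "(381/640) \<le> q" "q \<le> (3/5)" "(31/32) \<le> s" "s \<le> (1)"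
  shows "6129/100000 \<le> fpol q s"
proof -
  have "6129/100000 \<le> LB (381/640) (3/5) (31/32) (1)" by (simp add: LB_def wl_def wh_def power_divide max_def)
  moreover have "LB (381/640) (3/5) (31/32) (1) \<le> fpol q s" by (rule box) (use assms in auto)
  ultimately show ?thesis by linarith
qed

lemma node71:
  assumes "(381/640) \<le> q" "q \<le> (3/5)" "(15/16) \<le> s" "s \<le> (1)"
  shows "6129/100000 \<le> fpol q s"
proof (cases "s \<le> (31/32)")
  case True
  show ?thesis by (rule node72) (use assms True in linarith)+
next
  case False
  show ?thesis by (rule node73) (use assms False in linarith)+
qed

lemma node69:
  assumes "(189/320) \<le> q" "q \<le> (3/5)" "(15/16) \<le> s" "s \<le> (1)"
  shows "6129/100000 \<le> fpol q s"
proof (cases "q \<le> (381/640)")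
  case True
  show ?thesis by (rule node70) (use assms True in linarith)+
next
  case False
  show ?thesis by (rule node71) (use assms False in linarith)+
qed

lemma node65:
  assumes "(189/320) \<le> q" "q \<le> (3/5)" "(7/8) \<le> s" "s \<le> (1)"
  shows "6129/100000 \<le> fpol q s"
proof (cases "s \<le> (15/16)")
  case True
  show ?thesis by (rule node66) (use assms True in linarith)+
next
  case False
  show ?thesis by (rule node69) (use assms False in linarith)+
qed

lemma node59:
  assumes "(93/160) \<le> q" "q \<le> (3/5)" "(7/8) \<le> s" "s \<le> (1)"
  shows "6129/100000 \<le> fpol q s"
proof (cases "q \<le> (189/320)")
  case True
  show ?thesis by (rule node60) (use assms True in linarith)+
next
  case False
  show ?thesis by (rule node65) (use assms False in linarith)+
qed

lemma node53:
  assumes "(93/160) \<le> q" "q \<le> (3/5)" "(3/4) \<le> s" "s \<le> (1)"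
  shows "6129/100000 \<le> fpol q s"
proof (cases "s \<le> (7/8)")
  case True
  show ?thesis by (rule node54) (use assms True in linarith)+
next
  case False
  show ?thesis by (rule node59) (use assms False in linarith)+
qed

lemma node39:
  assumes "(9/16) \<le> q" "q \<le> (3/5)" "(3/4) \<le> s" "s \<le> (1)"
  shows "6129/100000 \<le> fpol q s"
proof (cases "q \<le> (93/160)")
  case True
  show ?thesis by (rule node40) (use assms True in linarith)+
next
  case False
  show ?thesis by (rule node53) (use assms False in linarith)+
qed

lemma node33:
  assumes "(9/16) \<le> q" "q \<le> (3/5)" "(1/2) \<le> s" "s \<le> (1)"
  shows "6129/100000 \<le> fpol q s"
proof (cases "s \<le> (3/4)")
  case True
  show ?thesis by (rule node34) (use assms True in linarith)+
next
  case False
  show ?thesis by (rule node39) (use assms False in linarith)+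
qed

lemma node19:
  assumes "(21/40) \<le> q" "q \<le> (3/5)" "(1/2) \<le> s" "s \<le> (1)"
  shows "6129/100000 \<le> fpol q s"
proof (cases "q \<le> (9/16)")
  case True
  show ?thesis by (rule node20) (use assms True in linarith)+
next
  case False
  show ?thesis by (rule node33) (use assms False in linarith)+
qed

lemma node15:
  assumes "(21/40) \<le> q" "q \<le> (3/5)" "(0) \<le> s" "s \<le> (1)"
  shows "6129/100000 \<le> fpol q s"
proof (cases "s \<le> (1/2)")
  case True
  show ?thesis by (rule node16) (use assms True in linarith)+
next
  case False
  show ?thesis by (rule node19) (use assms False in linarith)+
qed

lemma node5:
  assumes "(9/20) \<le> q" "q \<le> (3/5)" "(0) \<le> s" "s \<le> (1)"
  shows "6129/100000 \<le> fpol q s"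
proof (cases "q \<le> (21/40)")
  case True
  show ?thesis by (rule node6) (use assms True in linarith)+
next
  case False
  show ?thesis by (rule node15) (use assms False in linarith)+
qed

lemma node1:
  assumes "(3/10) \<le> q" "q \<le> (3/5)" "(0) \<le> s" "s \<le> (1)"
  shows "6129/100000 \<le> fpol q s"
proof (cases "q \<le> (9/20)")
  case True
  show ?thesis by (rule node2) (use assms True in linarith)+
next
  case False
  show ?thesis by (rule node5) (use assms False in linarith)+
qed

lemmas fpol_lower = node1



lemma cpow:
  fixes a b :: real
  shows "Im (Complex a b ^ 0) = 0" "Im (Complex a b ^ 1) = b"
   "Im (Complex a b ^ 2) = 2*a*b"
   "Im (Complex a b ^ 3) = 3*a^2*b - b^3"
   "Im (Complex a b ^ 4) = 4*a^3*b - 4*a*b^3"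
   "Im (Complex a b ^ 5) = 5*a^4*b - 10*a^2*b^3 + b^5"
proof -
  have 2: "Complex a b ^ 2 = Complex (a^2-b^2) (2*a*b)"
    by (simp add: power2_eq_square complex_eq_iff algebra_simps)
  have 3: "Complex a b ^ 3 = Complex (a^3-3*a*b^2) (3*a^2*b - b^3)"
    using 2 by (simp add: power_Suc2[of _ 2, simplified] complex_eq_iff algebra_simps power2_eq_square power3_eq_cube)
  have 4: "Complex a b ^ 4 = Complex (a^4 - 6*a^2*b^2 + b^4) (4*a^3*b - 4*a*b^3)"
    using 3 by (simp add: power_Suc2[of _ 3, simplified] complex_eq_iff algebra_simps) (simp add: eval_nat_numeral algebra_simps)
  have 5: "Complex a b ^ 5 = Complex (a^5 - 10*a^3*b^2 + 5*a*b^4) (5*a^4*b - 10*a^2*b^3 + b^5)"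
    using 4 by (simp add: power_Suc2[of _ 4, simplified] complex_eq_iff algebra_simps) (simp add: eval_nat_numeral algebra_simps)
  show "Im (Complex a b ^ 0) = 0" "Im (Complex a b ^ 1) = b" by simp_all
  show "Im (Complex a b ^ 2) = 2*a*b" using 2 by simp
  show "Im (Complex a b ^ 3) = 3*a^2*b - b^3" using 3 by simp
  show "Im (Complex a b ^ 4) = 4*a^3*b - 4*a*b^3" using 4 by simp
  show "Im (Complex a b ^ 5) = 5*a^4*b - 10*a^2*b^3 + b^5" using 5 by simp
qed

lemma im_theta5: "Im (theta5 q (w * s)) = w * fpol q s"
proof -
  have w2: "w^2 = 9/2" by (rule w_sq)
  have st: "{..5::nat} = {0,1,2,3,4,5}" by auto
  have "Im (theta5 q (w * s)) = q*w - 2*w* s*w*q^3 + (3*(w* s)^2*w - w^3)*q^6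
     + (-4*(w* s)^3*w + 4*(w* s)*w^3)*q^10 + (5*(w* s)^4*w - 10*(w* s)^2*w^3 + w^5)*q^15"
    unfolding theta5_def zpt_def st by (simp add: cpow)
  also have "\<dots> = w * fpol q s"
    unfolding fpol_def using w2 by algebra
  finally show ?thesis .
qed

lemma cmod_zpt: assumes "0 \<le> t" "t \<le> w" shows "cmod (zpt t) \<le> 3"
proof -
  have "t^2 \<le> w^2" using assms by (intro power_mono) auto
  hence "t^2 + w^2 \<le> 9" using w_sq by simp
  hence "sqrt (t^2 + w^2) \<le> sqrt 9" by (rule real_sqrt_le_mono)
  moreover have "sqrt 9 = (3::real)" by (simp add: real_sqrt_unique)
  ultimately show ?thesis by (simp add: zpt_def cmod_def)
qed

lemma expo_bound: "21 + 7*j \<le> (j + 6) * (j + 7) div (2::nat)"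
proof -
  have "2 * (21 + 7*j) \<le> (j + 6) * (j + 7)" by (simp add: algebra_simps)
  hence "(2 * (21 + 7*j)) div 2 \<le> (j + 6) * (j + 7) div 2" by (rule div_le_mono)
  thus ?thesis by simp
qed

definition tterm :: "real \<Rightarrow> real \<Rightarrow> nat \<Rightarrow> complex" where
  "tterm q t j = complex_of_real (q ^ (j * (j + 1) div 2)) * zpt t ^ j"

lemma tail_norm:
  assumes "0 \<le> q" "q \<le> 3/5" "0 \<le> t" "t \<le> w"
  shows "norm (tterm q t (j + 6)) \<le> ((3/5)^21 * 3^6) * ((3/5)^7 * 3)^j"
proof -
  have e: "j + 6 + 1 = j + (7::nat)" by simp
  have "norm (tterm q t (j + 6)) = q ^ ((j + 6) * (j + 7) div 2) * cmod (zpt t) ^ (j + 6)"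
    unfolding tterm_def e using assms by (simp add: norm_mult norm_power)
  also have "\<dots> \<le> (3/5) ^ (21 + 7*j) * 3 ^ (j + 6)"
  proof (rule mult_mono)
    have "q ^ ((j + 6) * (j + 7) div 2) \<le> (3/5) ^ ((j + 6) * (j + 7) div 2)"
      using assms by (intro power_mono) auto
    also have "\<dots> \<le> (3/5) ^ (21 + 7*j)"
      by (rule power_decreasing[OF expo_bound]) auto
    finally show "q ^ ((j + 6) * (j + 7) div 2) \<le> (3/5) ^ (21 + 7*j)" .
    show "cmod (zpt t) ^ (j + 6) \<le> 3 ^ (j + 6)"
      using cmod_zpt[OF assms(3,4)] by (intro power_mono) auto
  qed (use assms in auto)
  also have "\<dots> = ((3/5)^21 * 3^6) * ((3/5)^7 * 3)^j"
    by (simp only: power_add power_mult power_mult_distrib mult_ac) (simp only: power_mult[symmetric] mult.commute)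
  finally show ?thesis .
qed

lemma tail_summable:
  assumes "0 \<le> q" "q \<le> 3/5" "0 \<le> t" "t \<le> w"
  shows "summable (\<lambda>j. norm (tterm q t (j + 6)))"
        "summable (tterm q t)"
        "cmod (theta_star q t) \<le> 18/1000"
        "theta q (Complex (- t) w) = theta_star q t + theta5 q t"
proof -
  have g: "summable (\<lambda>j. ((3/5::real)^21 * 3^6) * ((3/5)^7 * 3)^j)"
    by (intro summable_mult summable_geometric) (simp add: power_divide)
  show s1: "summable (\<lambda>j. norm (tterm q t (j + 6)))"
    by (rule summable_comparison_test[OF _ g]) (use tail_norm[OF assms] in auto)
  hence s2: "summable (\<lambda>j. tterm q t (j + 6))" by (rule summable_norm_cancel)
  thus s3: "summable (tterm q t)" by (simp add: summable_iff_shift)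
  have ts: "theta_star q t = (\<Sum>j. tterm q t (j + 6))"
  proof -
    have e: "\<And>j::nat. j + 6 + 1 = j + 7" by simp
    show ?thesis unfolding theta_star_def tterm_def by (simp only: e)
  qed
  have "cmod (theta_star q t) \<le> (\<Sum>j. norm (tterm q t (j + 6)))"
    unfolding ts by (rule summable_norm[OF s1])
  also have "\<dots> \<le> (\<Sum>j. ((3/5::real)^21 * 3^6) * ((3/5)^7 * 3)^j)"
    by (rule suminf_le[OF _ s1 g]) (use tail_norm[OF assms] in auto)
  also have "\<dots> = ((3/5::real)^21 * 3^6) / (1 - (3/5)^7 * 3)"
  proof -
    have r: "norm ((3/5::real)^7 * 3) < 1" by (simp add: power_divide)
    have "(\<Sum>j. ((3/5::real)^21 * 3^6) * ((3/5)^7 * 3)^j) = ((3/5::real)^21 * 3^6) * (\<Sum>j. ((3/5::real)^7 * 3)^j)"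
      by (rule suminf_mult[OF summable_geometric[OF r]])
    also have "(\<Sum>j. ((3/5::real)^7 * 3)^j) = 1 / (1 - (3/5::real)^7 * 3)"
      by (rule suminf_geometric[OF r])
    finally show ?thesis by simp
  qed
  also have "\<dots> \<le> 18/1000" by (simp add: power_divide)
  finally show "cmod (theta_star q t) \<le> 18/1000" .
  have "theta q (Complex (- t) w) = suminf (tterm q t)"
    unfolding theta_def tterm_def zpt_def ..
  also have "\<dots> = (\<Sum>j. tterm q t (j + 6)) + (\<Sum>i<6. tterm q t i)"
    by (rule suminf_split_initial_segment[OF s3])
  also have "(\<Sum>i<6. tterm q t i) = theta5 q t"
  proof -
    have "{..<6::nat} = {..5}" by auto
    thus ?thesis unfolding theta5_def tterm_def by simp
  qed
  finally show "theta q (Complex (- t) w) = theta_star q t + theta5 q t" using ts by simp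
qed

theorem lemma7:
  fixes q t :: real
  assumes "0.3 \<le> q" "q \<le> 0.6" "0 \<le> t" "t \<le> w"
  shows "cmod (theta_star q t) \<le> 0.018 \<and> Im (theta5 q t) > 0.13
         \<and> theta q (Complex (- t) w) \<noteq> 0"
proof -
  have q1: "0 \<le> q" "q \<le> 3/5" using assms by simp_all
  note T = tail_summable[OF q1 assms(3,4)]
  have tail: "cmod (theta_star q t) \<le> 0.018" using T(3) by simp
  define s where "s = t / w"
  have ts: "t = w * s" using w_pos by (simp add: s_def)
  have s01: "0 \<le> s" "s \<le> 1" using assms(3,4) w_pos by (simp_all add: s_def)
  have f: "6129/100000 \<le> fpol q s"
    by (rule fpol_lower) (use assms s01 in simp_all)
  have "0.13 < wl * (6129/100000)" by (simp add: wl_def)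
  also have "\<dots> \<le> w * fpol q s"
    using f w_bounds(1) by (intro mult_mono) (auto simp: wl_def)
  also have "\<dots> = Im (theta5 q t)" unfolding ts by (rule im_theta5[symmetric])
  finally have im5: "Im (theta5 q t) > 0.13" .
  have "Im (theta q (Complex (- t) w)) = Im (theta_star q t) + Im (theta5 q t)"
    using T(4) by simp
  moreover have "- cmod (theta_star q t) \<le> Im (theta_star q t)"
    using abs_Im_le_cmod[of "theta_star q t"] by linarith
  moreover have "13/100 < Im (theta5 q t)" using im5 by simp
  ultimately have "Im (theta q (Complex (- t) w)) > 0" using T(3) by linarith
  hence "theta q (Complex (- t) w) \<noteq> 0" by auto
  with tail im5 show ?thesis by blast
qed

end
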